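(* Define the sequence $(\psi_n)_{n\ge1}$ by $\psi_1=1$ and, for $n\ge2$, $$\psi_n=\Big(1+\frac1n\Big)\psi_{n-1}\ \text{ if $n$ is even},\qquad \psi_n=\Big(1+\frac1n\Big)\psi_{n-1}-\frac{2}{n}\psi_{(n-1)/2}\ \text{ if $n$ is odd}.$$ Then $\lim_{n\to\infty}\psi_n=\dfrac{1}{2-2\ln2}$. Equivalently, the Taylor coefficients $\varphi_n=n\psi_n$ of the solution $\Phi$ of $\int_0^1\Phi(rz+(1-r)z^2)\,dr=\frac12\Phi(z)$, $\Phi(0)=0$, $\Phi'(0)=1$, satisfy $\varphi_n/n\to\frac1{2(1-\ln 2)}$. *)

theory Defs
  imports Complex_Main
begin

text \<open>The sequence psi_n for n >= 1; the value at 0 is a dummy (never used for n >= 1,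
  since for odd n >= 3 we have (n-1)/2 = n div 2 >= 1).\<close>
fun psi :: "nat \<Rightarrow> real" where
  "psi n =
     (if n = 0 then 0
      else if n = 1 then 1
      else if even n then (1 + 1 / real n) * psi (n - 1)
      else (1 + 1 / real n) * psi (n - 1) - (2 / real n) * psi ((n - 1) div 2))"

declare psi.simps [simp del]

end

theory Submission imports Defs "HOL-Analysis.Harmonic_Numbers" "HOL-Real_Asymp.Real_Asymp" begin

lemma psi_0: "psi 0 = 0" by (subst psi.simps) simp
lemma psi_1: "psi 1 = 1" by (subst psi.simps) simp
lemma psi_1': "psi (Suc 0) = 1" by (subst psi.simps) simp
lemma psi_evenn: "even n \<Longrightarrow> n \<ge> 2 \<Longrightarrow> psi n = (1 + 1/real n) * psi (n-1)"
  by (subst psi.simps) simp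
lemma psi_even: "psi (2*m+2) = (1 + 1/real(2*m+2)) * psi (2*m+1)"
  by (subst psi.simps) simp
lemma psi_odd: "psi (2*m+3) = (1 + 1/real(2*m+3)) * psi (2*m+2) - 2/real(2*m+3) * psi (m+1)"
  by (subst psi.simps) simp

lemma sum_split: "m \<le> n \<Longrightarrow> sum (f::nat\<Rightarrow>real) {m<..n} = sum f {..<Suc n} - sum f {..<Suc m}"
proof -
  assume "m \<le> n"
  hence "{..<Suc n} = {..<Suc m} \<union> {m<..n}" by auto
  moreover have "{..<Suc m} \<inter> {m<..n} = {}" by auto
  ultimately have "sum f {..<Suc n} = sum f {..<Suc m} + sum f {m<..n}"
    by (simp add: sum.union_disjoint)
  thus ?thesis by simp
qed

lemma alg0:
  fixes p q r x w :: real assumes "p > 0" "q = p + 1" "r = p + 2"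
  shows "((1 + 1/q) * ((1 + 1/p) * x) - 2/q * w) - x - ((1 + 1/p) * x)/q
     - ((1 + 1/q) * ((1 + 1/p) * x) - 2/q * w)/r + 2*w/r = 0"
proof -
  have nz: "p \<noteq> 0" "q \<noteq> 0" "r \<noteq> 0" using assms by auto
  have "((1 + 1/q) * ((1 + 1/p) * x) - 2/q * w) - x - ((1 + 1/p) * x)/q
     - ((1 + 1/q) * ((1 + 1/p) * x) - 2/q * w)/r + 2*w/r
     = (((q+1)*(p+1)*x - 2*p*w)*r - p*q*r*x - (p+1)*x*r - ((q+1)*(p+1)*x - 2*p*w) + 2*w*p*q)/(p*q*r)"
    using nz by (simp add: field_simps)
  also have "\<dots> = 0" using assms by (simp add: algebra_simps)
  finally show ?thesis .
qed

lemma alg1: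
  fixes a x w :: real assumes "a \<ge> 0"
  shows "(1 + 1/(2*a+3)) * ((1 + 1/(2*a+2)) * x) - 2/(2*a+3) * w - x - ((1 + 1/(2*a+2)) * x)/(2*a+3)
     - ((1 + 1/(2*a+3)) * ((1 + 1/(2*a+2)) * x) - 2/(2*a+3) * w)/(2*a+4) + w/(a+2) = 0"
proof -
  have "w/(a+2) = 2*w/(2*a+4)" using assms by (simp add: field_simps)
  thus ?thesis using alg0[of "2*a+2" "2*a+3" "2*a+4" x w] assms by simp
qed

lemma conserv: "psi(2*m+1) - (\<Sum>k<2*m+2. psi k/(k+1)) + (\<Sum>k<m+1. psi k/(k+1)) = 1/2"
proof (induction m)
  case 0
  show ?case by (simp add: psi_0 psi_1' numeral_2_eq_2)
next
  case (Suc m)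
  have e1: "2*Suc m+2 = Suc (Suc (2*m+2))" by simp
  have e2: "Suc m + 1 = Suc (m+1)" by simp
  have e3: "2*Suc m+1 = 2*m+3" by simp
  have "(\<Sum>k<2*Suc m+2. psi k/(k+1)) = (\<Sum>k<2*m+2. psi k/(k+1)) + psi (2*m+2)/(2*m+3) + psi(2*m+3)/(2*m+4)"
    unfolding e1 sum.lessThan_Suc by (simp add: eval_nat_numeral algebra_simps)
  moreover have "(\<Sum>k<Suc m+1. psi k/(k+1)) = (\<Sum>k<m+1. psi k/(k+1)) + psi (m+1)/(m+2)"
    unfolding e2 by (simp add: algebra_simps)
  moreover have "psi(2*m+3) - psi(2*m+1) - psi (2*m+2)/(2*m+3) - psi(2*m+3)/(2*m+4) + psi (m+1)/(m+2) = 0"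
    using alg1[of "real m" "psi(2*m+1)" "psi(m+1)"] unfolding psi_odd psi_even by (simp add: add_ac mult_ac)
  ultimately show ?case using Suc.IH unfolding e3 by linarith
qed


definition wt :: "nat \<Rightarrow> real" where "wt k = (if odd k then 1/real(k+1) else 1/real k)"
definition od :: "nat \<Rightarrow> nat" where "od k = (if odd k then k else k - 1)"

lemma t_eq: assumes k1: "k \<ge> 1" shows "psi k / (real k + 1) = wt k * psi (od k)"
proof (cases "odd k")
  case True then show ?thesis by (simp add: wt_def od_def)
next
  case False
  have k2: "k \<ge> 2" using False k1 unfolding even_iff_mod_2_eq_zero by presburger
  have "psi k = (1 + 1/real k) * psi (k-1)" using psi_evenn False k2 by simp
  also have "\<dots> = (real k + 1)/real k * psi (k-1)" using k2 by (simp add: field_simps)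
  finally have "psi k / (real k + 1) = psi (k-1) / real k" using k2 by (simp add: field_simps)
  thus ?thesis using False by (simp add: wt_def od_def)
qed

lemma ident: assumes "m \<ge> 1"
  shows "psi(2*m+1)*(2*m+1)/(2*m+2) = 1/2 + (\<Sum>k\<in>{m<..2*m}. wt k * psi(od k))"
proof -
  have "(\<Sum>k\<in>{m<..2*m+1}. psi k/(k+1)) = (\<Sum>k<2*m+2. psi k/(k+1)) - (\<Sum>k<m+1. psi k/(k+1))"
    using sum_split[of m "2*m+1" "\<lambda>k. psi k/(k+1)"] by simp
  hence c: "psi(2*m+1) - (\<Sum>k\<in>{m<..2*m+1}. psi k/(k+1)) = 1/2" using conserv[of m] by linarith
  have "{m<..2*m+1} = insert (2*m+1) {m<..2*m}" by auto
  hence "(\<Sum>k\<in>{m<..2*m+1}. psi k/(k+1)) = psi (2*m+1)/(2*m+2) + (\<Sum>k\<in>{m<..2*m}. psi k/(k+1))"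
    by (simp add: add_ac)
  moreover have "(\<Sum>k\<in>{m<..2*m}. psi k/(k+1)) = (\<Sum>k\<in>{m<..2*m}. wt k * psi(od k))"
  proof (rule sum.cong)
    fix k assume "k \<in> {m<..2*m}"
    hence "k \<ge> 1" by auto
    from t_eq[OF this] show "psi k/(k+1) = wt k * psi(od k)" by (simp add: add.commute)
  qed simp
  moreover have "psi(2*m+1)*(2*m+1)/(2*m+2) = psi(2*m+1) - psi (2*m+1)/(2*m+2)"
    by (simp add: field_simps)
  ultimately show ?thesis using c by linarith
qed

lemma harm_up: assumes m1: "1 \<le> m" and mn: "m \<le> n" shows "(\<Sum>k\<in>{m<..n}. 1/real k) \<le> ln n - ln m"
  using mn proof (induction n rule: dec_induct)
  case base then show ?case by simp
next
  case (step n)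
  have "{m<..Suc n} = insert (Suc n) {m<..n}" using step by auto
  hence e: "(\<Sum>k\<in>{m<..Suc n}. 1/real k) = 1/real (Suc n) + (\<Sum>k\<in>{m<..n}. 1/real k)" by simp
  have n1: "real n \<ge> 1" using step m1 by simp
  have "ln (real n / real (Suc n)) \<le> real n / real (Suc n) - 1"
    by (rule ln_le_minus_one) (use n1 in simp)
  also have "\<dots> = - 1/real (Suc n)" by (simp add: field_simps)
  finally have "1/real (Suc n) \<le> ln (real (Suc n)) - ln n" using n1 by (simp add: ln_div)
  then show ?case using e step.IH by linarith
qed

lemma harm_low: "m \<le> n \<Longrightarrow> ln (real n + 2) - ln (real m + 2) \<le> (\<Sum>k\<in>{m<..n}. 1/(real k + 1))"
proof (induction n rule: dec_induct)
  case base then show ?case by simp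
next
  case (step n)
  have "{m<..Suc n} = insert (Suc n) {m<..n}" using step by auto
  hence e: "(\<Sum>k\<in>{m<..Suc n}. 1/(real k+1)) = 1/(real n + 2) + (\<Sum>k\<in>{m<..n}. 1/(real k+1))" by simp
  have "ln (1 + 1/(real n + 2)) \<le> 1/(real n + 2)" by (rule ln_add_one_self_le_self) simp
  moreover have "1 + 1/(real n + 2) = (real n + 3)/(real n + 2)" by (simp add: field_simps)
  ultimately have "ln (real n + 3) - ln (real n + 2) \<le> 1/(real n + 2)" by (simp add: ln_div)
  have r: "real (Suc n) + 2 = real n + 3" by simp
  show ?case unfolding r using e step.IH \<open>ln (real n + 3) - ln (real n + 2) \<le> 1/(real n + 2)\<close> by linarith
qed

definition W :: "nat \<Rightarrow> real" where "W m = (\<Sum>k\<in>{m<..2*m}. wt k)"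

lemma W_le: "m \<ge> 1 \<Longrightarrow> W m \<le> ln 2"
proof -
  assume m: "m \<ge> 1"
  have "W m \<le> (\<Sum>k\<in>{m<..2*m}. 1/real k)" unfolding W_def
    by (rule sum_mono) (auto simp: wt_def divide_simps)
  also have "\<dots> \<le> ln (real (2*m)) - ln m" using harm_up[of m "2*m"] m by simp
  also have "\<dots> = ln 2" using m by (simp add: ln_mult)
  finally show ?thesis .
qed

lemma W_ge: "ln (2*real m + 2) - ln (real m + 2) \<le> W m"
proof -
  have "ln (2*real m + 2) - ln (real m + 2) \<le> (\<Sum>k\<in>{m<..2*m}. 1/(real k + 1))"
    using harm_low[of m "2*m"] by simp
  also have "\<dots> \<le> W m" unfolding W_def
    by (rule sum_mono) (auto simp: wt_def divide_simps)
  finally show ?thesis .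
qed

lemma W_lim: "W \<longlonglongrightarrow> ln 2"
proof (rule tendsto_sandwich[of "\<lambda>m. ln (2*real m + 2) - ln (real m + 2)" _ _ "\<lambda>_. ln 2"])
  show "\<forall>\<^sub>F n in sequentially. ln (2 * real n + 2) - ln (real n + 2) \<le> W n"
    using W_ge by simp
  show "\<forall>\<^sub>F n in sequentially. W n \<le> ln 2"
    using eventually_ge_at_top[of 1] by eventually_elim (rule W_le)
  show "(\<lambda>m. ln (2*real m + 2) - ln (real m + 2)) \<longlonglongrightarrow> ln 2" by real_asymp
qed simp

lemma wt_nonneg: "wt k \<ge> 0" by (simp add: wt_def)

lemma bound_odd: "\<bar>psi(2*m+1)\<bar> \<le> 9"
proof (induction m rule: less_induct)
  case (less m)
  show ?case
  proof (cases "m = 0")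
    case True then show ?thesis by (simp add: psi_1')
  next
    case False
    hence m: "m \<ge> 1" by simp
    have "\<bar>\<Sum>k\<in>{m<..2*m}. wt k * psi(od k)\<bar> \<le> (\<Sum>k\<in>{m<..2*m}. \<bar>wt k * psi(od k)\<bar>)"
      by (rule sum_abs)
    also have "\<dots> \<le> (\<Sum>k\<in>{m<..2*m}. wt k * 9)"
    proof (rule sum_mono)
      fix k assume k: "k \<in> {m<..2*m}"
      have "odd (od k)" unfolding od_def using k by auto
      then obtain j where j: "od k = 2*j+1" by (metis oddE)
      have "od k \<le> 2*m" using k unfolding od_def by auto
      hence "j < m" using j by simp
      hence "\<bar>psi (od k)\<bar> \<le> 9" using less.IH j by simp
      thus "\<bar>wt k * psi(od k)\<bar> \<le> wt k * 9" using wt_nonneg[of k]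
        by (simp add: abs_mult mult_left_mono)
    qed
    also have "\<dots> = 9 * W m" unfolding W_def by (subst sum_distrib_left) (simp add: mult.commute)
    also have "\<dots> \<le> 9 * (25/36)" using W_le[OF m] ln2_le_25_over_36 by simp
    finally have s: "\<bar>\<Sum>k\<in>{m<..2*m}. wt k * psi(od k)\<bar> \<le> 25/4" by simp
    have "\<bar>psi(2*m+1)*(2*m+1)/(2*m+2)\<bar> \<le> 27/4"
      using ident[OF m] s by linarith
    moreover have "\<bar>psi(2*m+1)*(2*m+1)/(2*m+2)\<bar> = \<bar>psi(2*m+1)\<bar>*(2*m+1)/(2*m+2)"
      by (simp add: abs_mult)
    ultimately have "\<bar>psi(2*m+1)\<bar>*(2*m+1)/(2*m+2) \<le> 27/4" by simp
    hence "\<bar>psi(2*m+1)\<bar> \<le> 27/4 * (2*m+2)/(2*m+1)" by (simp add: field_simps)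
    also have "\<dots> \<le> 27/4 * (4/3)" using m by (simp add: field_simps)
    finally show ?thesis by simp
  qed
qed


lemma contract:
  fixes P :: "real \<Rightarrow> bool"
  assumes mono: "\<And>B B'. P B \<Longrightarrow> B \<le> B' \<Longrightarrow> P B'"
    and P0: "P B0" "B0 \<ge> 0"
    and step: "\<And>B \<eta>. B \<ge> 0 \<Longrightarrow> \<eta> > 0 \<Longrightarrow> P B \<Longrightarrow> P (4/5*B + \<eta>)"
    and eps: "\<epsilon> > 0"
  shows "P \<epsilon>"
proof -
  define c :: real where "c = 4/5"
  have it: "P (c^k * B0 + \<epsilon>/2 * (1 - c^k))" for k
  proof (induction k)
    case 0 then show ?case using P0 by simp
  next
    case (Suc k)
    have ck: "c^k \<le> 1" "c^k \<ge> 0" unfolding c_def by (auto simp: power_le_one)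
    have "c^k * B0 + \<epsilon>/2 * (1 - c^k) \<ge> 0" using ck P0 eps by (simp add: mult_nonneg_nonneg)
    from step[OF this _ Suc.IH, of "\<epsilon>/10"] eps
    have "P (4/5 * (c^k * B0 + \<epsilon>/2 * (1 - c^k)) + \<epsilon>/10)" by simp
    moreover have "4/5 * (c^k * B0 + \<epsilon>/2 * (1 - c^k)) + \<epsilon>/10 = c^Suc k * B0 + \<epsilon>/2 * (1 - c^Suc k)"
      unfolding c_def by (simp add: algebra_simps)
    ultimately show ?case by simp
  qed
  obtain k where k: "c^k < \<epsilon>/(2*(B0+1))"
    using real_arch_pow_inv[of "\<epsilon>/(2*(B0+1))" c] eps P0 unfolding c_def by auto
  have ck: "c^k \<ge> 0" unfolding c_def by simp
  have "c^k * B0 \<le> c^k * (B0+1)" using ck by (intro mult_left_mono) auto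
  also have "\<dots> < \<epsilon>/2" using k P0 by (simp add: field_simps)
  finally have h: "c^k * B0 < \<epsilon>/2" .
  have "\<epsilon>/2*c^k \<ge> 0" using ck eps by simp
  moreover have "c^k * B0 + \<epsilon>/2 * (1 - c^k) = c^k * B0 + \<epsilon>/2 - \<epsilon>/2*c^k" by (simp only: right_diff_distrib mult_1_right add_diff_eq)
  ultimately have "c^k * B0 + \<epsilon>/2 * (1 - c^k) \<le> \<epsilon>" using h by linarith
  thus ?thesis using mono[OF it] by blast
qed

definition LL :: real where "LL = 1 / (2 - 2 * ln 2)"
definition dlt :: "nat \<Rightarrow> real" where "dlt m = 1/2 + LL * W m - LL * (2*m+1)/(2*m+2)"

lemma LL_eq: "LL * (1 - ln 2) = 1/2"
proof -
  have "ln (2::real) < 1" by (rule ln_2_less_1)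
  thus ?thesis unfolding LL_def by (simp add: field_simps)
qed

lemma dlt_lim: "dlt \<longlonglongrightarrow> 0"
proof -
  have f: "(\<lambda>m. (1 + 2*real m)/(2 + 2*real m)) \<longlonglongrightarrow> 1" by real_asymp
  have "(\<lambda>m. 1/2 + LL * W m - LL * ((1 + 2*real m)/(2 + 2*real m))) \<longlonglongrightarrow> 1/2 + LL * ln 2 - LL * 1"
    by (intro tendsto_intros W_lim f)
  moreover have "1/2 + LL * ln 2 - LL * 1 = 0" using LL_eq by (simp add: algebra_simps)
  ultimately show ?thesis unfolding dlt_def by simp
qed

definition PP :: "real \<Rightarrow> bool" where "PP B = (\<exists>N. \<forall>n\<ge>N. odd n \<longrightarrow> \<bar>psi n - LL\<bar> \<le> B)"

lemma err_ident: assumes "m \<ge> 1"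
  shows "(psi(2*m+1) - LL)*(2*m+1)/(2*m+2) = dlt m + (\<Sum>k\<in>{m<..2*m}. wt k * (psi(od k) - LL))"
proof -
  have "(\<Sum>k\<in>{m<..2*m}. wt k * (psi(od k) - LL)) = (\<Sum>k\<in>{m<..2*m}. wt k * psi(od k)) - LL * W m"
    unfolding W_def by (simp add: algebra_simps sum_subtractf sum_distrib_left)
  moreover have "(psi(2*m+1) - LL)*(2*m+1)/(2*m+2) = psi(2*m+1)*(2*m+1)/(2*m+2) - LL*(2*m+1)/(2*m+2)"
    by (simp add: algebra_simps diff_divide_distrib)
  ultimately show ?thesis using ident[OF assms] unfolding dlt_def by simp
qed

lemma PP_step: assumes B: "B \<ge> 0" and eta: "\<eta> > 0" and P: "PP B" shows "PP (4/5*B + \<eta>)"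
proof -
  obtain N where N: "\<And>n. n \<ge> N \<Longrightarrow> odd n \<Longrightarrow> \<bar>psi n - LL\<bar> \<le> B" using P unfolding PP_def by auto
  have t: "\<forall>e>0. \<forall>\<^sub>F m in sequentially. \<bar>dlt m\<bar> < e"
    using dlt_lim unfolding tendsto_iff dist_real_def by simp
  have "\<forall>\<^sub>F m in sequentially. \<bar>dlt m\<bar> < \<eta>/2"
    using t[rule_format, of "\<eta>/2"] eta by simp
  then obtain N2 where N2: "\<And>m. m \<ge> N2 \<Longrightarrow> \<bar>dlt m\<bar> < \<eta>/2" by (auto simp: eventually_sequentially)
  define N' where "N' = max N (max N2 3)"
  have "\<forall>n\<ge>2*N'+1. odd n \<longrightarrow> \<bar>psi n - LL\<bar> \<le> 4/5*B + \<eta>"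
  proof (intro allI impI)
    fix n assume n: "n \<ge> 2*N'+1" "odd n"
    then obtain m where mdef: "n = 2*m+1" by (metis oddE)
    have mN: "m \<ge> N'" using n mdef by simp
    hence m3: "m \<ge> 3" and m1: "m \<ge> 1" unfolding N'_def by auto
    have "\<bar>\<Sum>k\<in>{m<..2*m}. wt k * (psi(od k) - LL)\<bar> \<le> (\<Sum>k\<in>{m<..2*m}. \<bar>wt k * (psi(od k) - LL)\<bar>)"
      by (rule sum_abs)
    also have "\<dots> \<le> (\<Sum>k\<in>{m<..2*m}. wt k * B)"
    proof (rule sum_mono)
      fix k assume k: "k \<in> {m<..2*m}"
      have "odd (od k)" unfolding od_def using k by auto
      moreover have "od k \<ge> m" using k unfolding od_def by auto
      hence "od k \<ge> N" using mN unfolding N'_def by simp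
      ultimately have "\<bar>psi (od k) - LL\<bar> \<le> B" using N by simp
      thus "\<bar>wt k * (psi(od k) - LL)\<bar> \<le> wt k * B" using wt_nonneg[of k]
        by (simp add: abs_mult mult_left_mono)
    qed
    also have "\<dots> = B * W m" unfolding W_def by (subst sum_distrib_left) (simp add: mult.commute)
    also have "\<dots> \<le> B * (25/36)"
    proof -
      have "W m \<le> 25/36" using W_le[OF m1] ln2_le_25_over_36 by linarith
      thus ?thesis using B by (rule mult_left_mono)
    qed
    finally have s: "\<bar>\<Sum>k\<in>{m<..2*m}. wt k * (psi(od k) - LL)\<bar> \<le> 25/36*B" by simp
    have d: "\<bar>dlt m\<bar> < \<eta>/2" using N2 mN unfolding N'_def by simp
    have "\<bar>(psi(2*m+1) - LL)*(2*m+1)/(2*m+2)\<bar> \<le> \<eta>/2 + 25/36*B"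
      using err_ident[OF m1] s d by linarith
    moreover have "\<bar>(psi(2*m+1) - LL)*(2*m+1)/(2*m+2)\<bar> = \<bar>psi(2*m+1) - LL\<bar>*(2*m+1)/(2*m+2)"
      by (simp add: abs_mult)
    ultimately have "\<bar>psi(2*m+1) - LL\<bar>*(2*m+1)/(2*m+2) \<le> \<eta>/2 + 25/36*B" by simp
    hence "\<bar>psi(2*m+1) - LL\<bar> \<le> (\<eta>/2 + 25/36*B) * ((2*m+2)/(2*m+1))" by (simp add: field_simps)
    also have "\<dots> \<le> (\<eta>/2 + 25/36*B) * (8/7)"
      apply (rule mult_left_mono) using m3 B eta by (auto simp: field_simps)
    also have "\<dots> \<le> 4/5*B + \<eta>" using B eta by simp
    finally show "\<bar>psi n - LL\<bar> \<le> 4/5*B + \<eta>" using mdef by simp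
  qed
  thus ?thesis unfolding PP_def by blast
qed

lemma odd_bound: "odd n \<Longrightarrow> \<bar>psi n\<bar> \<le> 9"
  using bound_odd by (metis oddE)

theorem mainTheorem6:
  shows "psi \<longlonglongrightarrow> 1 / (2 - 2 * ln 2)"
proof -
  have P: "PP \<epsilon>" if "\<epsilon> > 0" for \<epsilon>
  proof (rule contract[of PP "9 + \<bar>LL\<bar>"])
    show "PP B'" if "PP B" "B \<le> B'" for B B' using that unfolding PP_def by force
    show "PP (9 + \<bar>LL\<bar>)" unfolding PP_def using odd_bound by (smt (verit))
  qed (use PP_step that in auto)
  show ?thesis unfolding LL_def[symmetric]
  proof (rule LIMSEQ_I)
    fix r :: real assume r: "r > 0"
    obtain N where N: "\<And>n. n \<ge> N \<Longrightarrow> odd n \<Longrightarrow> \<bar>psi n - LL\<bar> \<le> r/2"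
      using P[of "r/2"] r unfolding PP_def by auto
    obtain M :: nat where M: "real M > 18/r" using reals_Archimedean2 by blast
    have "\<forall>n\<ge>N+M+2. norm (psi n - LL) < r"
    proof (intro allI impI)
      fix n assume n: "n \<ge> N+M+2"
      show "norm (psi n - LL) < r"
      proof (cases "odd n")
        case True thus ?thesis using N[of n] n r by simp
      next
        case False
        have n2: "n \<ge> 2" using n by simp
        have o: "odd (n-1)" using False n2 by simp
        have e: "psi n - LL = (psi (n-1) - LL) + psi (n-1) / real n"
          using psi_evenn[of n] False n2 by (simp add: algebra_simps)
        have a1: "\<bar>psi (n-1) - LL\<bar> \<le> r/2" using N[OF _ o] n by simp
        have "real n > 18/r" using M n by linarith
        hence "9 / real n < r/2" using r n2 by (simp add: field_simps)
        moreover have "\<bar>psi (n-1) / real n\<bar> \<le> 9 / real n"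
          using odd_bound[OF o] n2 by (simp add: abs_divide divide_right_mono)
        moreover have "\<bar>psi n - LL\<bar> \<le> \<bar>psi(n-1) - LL\<bar> + \<bar>psi(n-1)/real n\<bar>"
          unfolding e by (rule abs_triangle_ineq)
        ultimately have "\<bar>psi n - LL\<bar> < r" using a1 by linarith
        thus ?thesis by simp
      qed
    qed
    thus "\<exists>no. \<forall>n\<ge>no. norm (psi n - LL) < r" by blast
  qed
qed

end
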